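(* Let $n\ge 1$, let $x_1,\dots,x_n$ be distinct integers each greater than $1$, and let $D=\{1,0,x_1,\dots,x_n\}$. If $(T,s)$ is an optimal signed tree realizing $D$ and $uv$ is the unique edge of $T$ with $s(uv)=-$, then $\deg(u)=\deg(v)=2$.
   Context: A signed tree is a pair $(T,s)$ where $T$ is a finite tree and $s:E(T)\to\{+,-\}$. The signed degree $sdeg(v)$ of a vertex is the number of incident positive edges minus the number of incident negative edges. $(T,s)$ realizes $D$ if $D=\{sdeg(v):v\in V(T)\}$. $\sigma(D)=\min\{|V(T)|: \text{some signed tree }(T,s)\text{ realizes }D\}$, and a signed tree $(T,s)$ realizing $D$ is optimal if $|V(T)|=\sigma(D)$. $\deg$ denotes the ordinary degree in $T$. *)

theory Defs
  imports Main
begin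

text \<open>A finite (simple, undirected) graph is given by a vertex set V and an edge set E
  of two-element subsets of V.  A sign function assigns True (= +) or False (= -) to edges.\<close>

definition is_walk :: "'a set set \<Rightarrow> 'a list \<Rightarrow> bool" where
  "is_walk E xs \<longleftrightarrow> xs \<noteq> [] \<and> (\<forall>i. Suc i < length xs \<longrightarrow> {xs ! i, xs ! Suc i} \<in> E)"

definition graph_connected :: "'a set \<Rightarrow> 'a set set \<Rightarrow> bool" where
  "graph_connected V E \<longleftrightarrow>
     (\<forall>u\<in>V. \<forall>v\<in>V. \<exists>xs. is_walk E xs \<and> set xs \<subseteq> V \<and> hd xs = u \<and> last xs = v)"

definition is_cycle :: "'a set set \<Rightarrow> 'a list \<Rightarrow> bool" where
  "is_cycle E xs \<longleftrightarrow> length xs \<ge> 3 \<and> distinct xs \<and> is_walk E xs \<and> {last xs, hd xs} \<in> E"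

definition is_tree :: "'a set \<Rightarrow> 'a set set \<Rightarrow> bool" where
  "is_tree V E \<longleftrightarrow> finite V \<and> V \<noteq> {} \<and>
     E \<subseteq> {{a, b} | a b. a \<in> V \<and> b \<in> V \<and> a \<noteq> b} \<and>
     graph_connected V E \<and> \<not> (\<exists>xs. is_cycle E xs)"

definition deg :: "'a set set \<Rightarrow> 'a \<Rightarrow> nat" where
  "deg E v = card {e \<in> E. v \<in> e}"

definition sdeg :: "'a set set \<Rightarrow> ('a set \<Rightarrow> bool) \<Rightarrow> 'a \<Rightarrow> int" where
  "sdeg E s v = int (card {e \<in> E. v \<in> e \<and> s e}) - int (card {e \<in> E. v \<in> e \<and> \<not> s e})"

definition realizes :: "'a set \<Rightarrow> 'a set set \<Rightarrow> ('a set \<Rightarrow> bool) \<Rightarrow> int set \<Rightarrow> bool" where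
  "realizes V E s D \<longleftrightarrow> D = sdeg E s ` V"

text \<open>sigma(D): least order of a signed tree realizing D (trees taken up to isomorphism,
  represented with natural-number vertices).\<close>
definition sigma :: "int set \<Rightarrow> nat" where
  "sigma D = (LEAST k. \<exists>(V::nat set) E s. is_tree V E \<and> realizes V E s D \<and> card V = k)"

definition optimal :: "'a set \<Rightarrow> 'a set set \<Rightarrow> ('a set \<Rightarrow> bool) \<Rightarrow> int set \<Rightarrow> bool" where
  "optimal V E s D \<longleftrightarrow> is_tree V E \<and> realizes V E s D \<and> card V = sigma D"

end

theory Submission
  imports Defs
begin

definition prs :: "'a set \<Rightarrow> 'a set set" where
  "prs V = {{a, b} | a b. a \<in> V \<and> b \<in> V \<and> a \<noteq> b}"

lemma is_tree_alt: "is_tree V E \<longleftrightarrow> finite V \<and> V \<noteq> {} \<and> E \<subseteq> prs V \<and>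
     graph_connected V E \<and> \<not> (\<exists>xs. is_cycle E xs)"
  unfolding is_tree_def prs_def by simp

lemma prs_sub_Pow: "prs V \<subseteq> Pow V" unfolding prs_def by auto

lemma finite_E: "finite V \<Longrightarrow> E \<subseteq> prs V \<Longrightarrow> finite E"
  by (rule finite_subset[of _ "Pow V"]) (use prs_sub_Pow in auto)

lemma prsE: "e \<in> prs V \<Longrightarrow> (\<And>a b. e = {a,b} \<Longrightarrow> a \<in> V \<Longrightarrow> b \<in> V \<Longrightarrow> a \<noteq> b \<Longrightarrow> P) \<Longrightarrow> P"
  unfolding prs_def by blast

lemma card_prs: "e \<in> prs V \<Longrightarrow> card e = 2"
  by (erule prsE) auto

lemma walk_Cons: "is_walk E xs \<Longrightarrow> {y, hd xs} \<in> E \<Longrightarrow> is_walk E (y # xs)"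
  unfolding is_walk_def
proof (intro conjI allI impI)
  fix i assume a: "xs \<noteq> [] \<and> (\<forall>i. Suc i < length xs \<longrightarrow> {xs ! i, xs ! Suc i} \<in> E)"
    "{y, hd xs} \<in> E" and i: "Suc i < length (y # xs)"
  show "{(y # xs) ! i, (y # xs) ! Suc i} \<in> E"
  proof (cases i)
    case 0 then show ?thesis using a by (simp add: hd_conv_nth)
  next
    case (Suc j) then show ?thesis using a i by simp
  qed
qed simp

lemma walk_snoc: "is_walk E xs \<Longrightarrow> {last xs, y} \<in> E \<Longrightarrow> is_walk E (xs @ [y])"
  unfolding is_walk_def
proof (intro conjI allI impI)
  fix i assume a: "xs \<noteq> [] \<and> (\<forall>i. Suc i < length xs \<longrightarrow> {xs ! i, xs ! Suc i} \<in> E)"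
    "{last xs, y} \<in> E" and i: "Suc i < length (xs @ [y])"
  show "{(xs @ [y]) ! i, (xs @ [y]) ! Suc i} \<in> E"
  proof (cases "Suc i < length xs")
    case True then show ?thesis using a by (simp add: nth_append)
  next
    case False
    then have "Suc i = length xs" using i by simp
    then have "i = length xs - 1" by simp
    then show ?thesis using a \<open>Suc i = length xs\<close> by (simp add: nth_append last_conv_nth)
  qed
qed simp

lemma walk_mono: "is_walk E xs \<Longrightarrow> E \<subseteq> F \<Longrightarrow> is_walk F xs"
  unfolding is_walk_def by blast

lemma walk_drop: "is_walk E xs \<Longrightarrow> j < length xs \<Longrightarrow> is_walk E (drop j xs)"
  unfolding is_walk_def by auto

lemma cycle_mono: "is_cycle E xs \<Longrightarrow> E \<subseteq> F \<Longrightarrow> is_cycle F xs"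
  unfolding is_cycle_def using walk_mono by blast

lemma cycle_edge:
  assumes "is_cycle E xs" "i < length xs"
  shows "{xs ! i, xs ! ((i + 1) mod length xs)} \<in> E"
proof (cases "Suc i < length xs")
  case True
  then show ?thesis using assms unfolding is_cycle_def is_walk_def by auto
next
  case False
  then have 1: "i = length xs - 1" using assms(2) by auto
  have "i+1 = length xs" using False assms(2) by simp
  then have 2: "(i+1) mod length xs = 0" by simp
  have ne: "xs \<noteq> []" using assms(2) by auto
  have "{last xs, hd xs} \<in> E" using assms unfolding is_cycle_def by auto
  then show ?thesis using 1 2 ne by (simp add: hd_conv_nth last_conv_nth)
qed

lemma handshake:
  assumes "finite V" "E \<subseteq> prs V"
  shows "(\<Sum>v\<in>V. deg E v) = 2 * card E"
proof -
  have fE: "finite E" using assms finite_E by blast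
  have "(\<Sum>v\<in>V. deg E v) = (\<Sum>v\<in>V. \<Sum>e\<in>E. if v \<in> e then 1 else 0)"
    unfolding deg_def using fE by (simp add: sum.inter_filter[symmetric])
  also have "\<dots> = (\<Sum>e\<in>E. \<Sum>v\<in>V. if v \<in> e then 1 else 0)" by (rule sum.swap)
  also have "\<dots> = (\<Sum>e\<in>E. card e)"
  proof (rule sum.cong)
    fix e assume "e \<in> E"
    then have "e \<subseteq> V" using assms prs_sub_Pow by blast
    then have "{v \<in> V. v \<in> e} = e" by blast
    moreover have "(\<Sum>v\<in>V. if v \<in> e then 1 else 0) = card {v \<in> V. v \<in> e}"
      using assms(1) by (simp add: sum.inter_filter[symmetric])
    ultimately show "(\<Sum>v\<in>V. if v \<in> e then 1 else 0) = card e" by simp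
  qed simp
  also have "\<dots> = (\<Sum>e\<in>E. 2)" using assms card_prs by (intro sum.cong) auto
  finally show ?thesis by simp
qed

lemma conn_deg:
  assumes "graph_connected V E" "w \<in> V" "p \<in> V" "p \<noteq> w" "finite E"
  shows "deg E w \<ge> 1"
proof -
  obtain xs where xs: "is_walk E xs" "hd xs = w" "last xs = p"
    using assms unfolding graph_connected_def by blast
  have ne: "xs \<noteq> []" using xs unfolding is_walk_def by auto
  have "length xs \<noteq> 1"
  proof
    assume "length xs = 1"
    then obtain a where "xs = [a]" by (cases xs) auto
    then show False using xs assms by simp
  qed
  then have "Suc 0 < length xs" using ne by (cases xs) auto
  then have "{xs!0, xs!1} \<in> E" using xs unfolding is_walk_def by auto
  moreover have "xs!0 = w" using xs ne by (simp add: hd_conv_nth)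
  ultimately have "{w, xs!1} \<in> {e \<in> E. w \<in> e}" by auto
  then have "{e \<in> E. w \<in> e} \<noteq> {}" by blast
  moreover have "finite {e \<in> E. w \<in> e}" using assms(5) by simp
  ultimately show ?thesis unfolding deg_def by (simp add: Suc_le_eq card_gt_0_iff)
qed

lemma prs_other: "e \<in> prs V \<Longrightarrow> y \<in> e \<Longrightarrow> \<exists>z\<in>V. z \<noteq> y \<and> e = {y, z}"
  by (erule prsE) auto

lemma two_elems: "2 \<le> card A \<Longrightarrow> \<exists>a b. a \<in> A \<and> b \<in> A \<and> a \<noteq> b"
proof -
  assume c: "2 \<le> card A"
  then have "A \<noteq> {}" by auto
  then obtain a where a: "a \<in> A" by blast
  have "finite A" using c card.infinite by fastforce
  then have "card (A - {a}) \<ge> 1" using c a by simp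
  then have "A - {a} \<noteq> {}" by (metis card.empty not_one_le_zero)
  then obtain b where "b \<in> A - {a}" by blast
  then show ?thesis using a by blast
qed

lemma exists_low_deg:
  assumes "finite V" "V \<noteq> {}" "E \<subseteq> prs V" "\<not>(\<exists>xs. is_cycle E xs)"
  shows "\<exists>y\<in>V. deg E y \<le> 1"
proof (rule ccontr)
  assume "\<not> ?thesis"
  hence all2: "\<forall>y\<in>V. deg E y \<ge> 2" by auto
  define P where "P xs \<longleftrightarrow> distinct xs \<and> is_walk E xs \<and> set xs \<subseteq> V" for xs
  obtain v0 where v0: "v0 \<in> V" using assms by blast
  have P0: "P [v0]" using v0 by (simp add: P_def is_walk_def)
  have bnd: "\<forall>ys. P ys \<longrightarrow> length ys < card V + 1"
  proof (intro allI impI)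
    fix ys assume "P ys"
    then have "card (set ys) = length ys" "set ys \<subseteq> V" unfolding P_def by (auto simp: distinct_card)
    then show "length ys < card V + 1" using card_mono[OF assms(1), of "set ys"] by linarith
  qed
  obtain xs where xs: "P xs" "\<forall>ys. P ys \<longrightarrow> length ys \<le> length xs"
    using ex_has_greatest_nat[of P "[v0]" length "card V + 1", OF P0 bnd] by blast
  have ne: "xs \<noteq> []" using xs(1) unfolding P_def is_walk_def by auto
  define y where "y = last xs"
  define L where "L = length xs"
  have Lpos: "L \<ge> 1" using ne L_def by (cases xs) auto
  have yV: "y \<in> V" using xs(1) ne unfolding P_def y_def by auto
  have yL: "xs ! (L - 1) = y" using ne unfolding y_def L_def by (simp add: last_conv_nth)
  have "2 \<le> card {e \<in> E. y \<in> e}" using all2 yV unfolding deg_def by auto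
  then obtain e1 e2 where e: "e1 \<in> {e \<in> E. y \<in> e}" "e2 \<in> {e \<in> E. y \<in> e}" "e1 \<noteq> e2"
    using two_elems by blast
  have e1: "e1 \<in> prs V" "y \<in> e1" "e1 \<in> E" using e(1) assms(3) by auto
  have e2: "e2 \<in> prs V" "y \<in> e2" "e2 \<in> E" using e(2) assms(3) by auto
  obtain z1 where z1: "z1 \<in> V" "z1 \<noteq> y" "e1 = {y, z1}" using prs_other[OF e1(1,2)] by blast
  obtain z2 where z2: "z2 \<in> V" "z2 \<noteq> y" "e2 = {y, z2}" using prs_other[OF e2(1,2)] by blast
  have "z1 \<noteq> z2" using z1(3) z2(3) e(3) by blast
  have "\<exists>z. z \<in> V \<and> z \<noteq> y \<and> {y, z} \<in> E \<and> (L \<ge> 2 \<longrightarrow> z \<noteq> xs ! (L - 2))"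
  proof (cases "L \<ge> 2 \<and> z1 = xs ! (L - 2)")
    case True then show ?thesis using z2 e2 \<open>z1 \<noteq> z2\<close> by (intro exI[of _ z2]) simp
  next
    case False then show ?thesis using z1 e1 by (intro exI[of _ z1]) simp
  qed
  then obtain z where z: "z \<in> V" "z \<noteq> y" "{y, z} \<in> E" "L \<ge> 2 \<longrightarrow> z \<noteq> xs ! (L - 2)"
    by blast
  have zin: "z \<in> set xs"
  proof (rule ccontr)
    assume zn: "z \<notin> set xs"
    have w: "is_walk E (xs @ [z])" using xs(1) z(3) walk_snoc[of E xs z] unfolding P_def y_def by simp
    have Pz: "P (xs @ [z])" unfolding P_def
      using xs(1) zn z(1) w unfolding P_def by simp
    show False using xs(2)[rule_format, OF Pz] by simp
  qed
  then obtain j where j: "j < L" "xs ! j = z" unfolding L_def by (auto simp: in_set_conv_nth)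
  have "j \<noteq> L - 1" using j yL z by auto
  then have L2: "L \<ge> 2" using j Lpos by auto
  have "j \<noteq> L - 2" using j z L2 by auto
  then have j3: "j + 3 \<le> L" using j \<open>j \<noteq> L - 1\<close> by auto
  define ys where "ys = drop j xs"
  have "is_cycle E ys" unfolding is_cycle_def
  proof (intro conjI)
    show "3 \<le> length ys" using j3 unfolding ys_def L_def by simp
    show "distinct ys" using xs(1) unfolding ys_def P_def by simp
    show "is_walk E ys" using xs(1) j walk_drop unfolding ys_def P_def L_def by blast
    have "hd ys = z" using j unfolding ys_def L_def by (simp add: hd_drop_conv_nth)
    moreover have "last ys = y" using j unfolding ys_def L_def y_def by simp
    ultimately show "{last ys, hd ys} \<in> E" using z by simp
  qed
  then show False using assms(4) by blast
qed

lemma forest_bound: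
  "finite V \<Longrightarrow> V \<noteq> {} \<Longrightarrow> E \<subseteq> prs V \<Longrightarrow> \<not>(\<exists>xs. is_cycle E xs) \<Longrightarrow> card E + 1 \<le> card V"
proof (induction "card V" arbitrary: V E rule: less_induct)
  case less
  obtain y where y: "y \<in> V" "deg E y \<le> 1" using exists_low_deg less.prems by blast
  define V' where "V' = V - {y}"
  define E' where "E' = {e \<in> E. y \<notin> e}"
  have fE: "finite E" using less.prems finite_E by blast
  have "E = E' \<union> {e \<in> E. y \<in> e}" unfolding E'_def by blast
  then have "card E \<le> card E' + card {e \<in> E. y \<in> e}" by (metis card_Un_le)
  then have cE: "card E \<le> card E' + 1" using y unfolding deg_def by simp
  have cV: "card V' = card V - 1" unfolding V'_def using y less.prems by simp
  show ?case
  proof (cases "V' = {}")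
    case True
    then have "V = {y}" using y unfolding V'_def by auto
    then have "prs V = {}" unfolding prs_def by auto
    then have "E = {}" using less.prems by auto
    then show ?thesis using less.prems by (simp add: card_gt_0_iff Suc_le_eq)
  next
    case False
    have sub: "E' \<subseteq> prs V'"
    proof
      fix e assume "e \<in> E'"
      then have "e \<in> prs V" "y \<notin> e" using less.prems unfolding E'_def by auto
      then obtain a b where "e = {a,b}" "a \<in> V" "b \<in> V" "a \<noteq> b" using prsE[of e V] by metis
      then show "e \<in> prs V'" using \<open>y \<notin> e\<close> unfolding V'_def prs_def by blast
    qed
    have "E' \<subseteq> E" unfolding E'_def by blast
    then have nc: "\<not>(\<exists>xs. is_cycle E' xs)" using less.prems(4) cycle_mono by blast
    have "card V' < card V" using cV y less.prems by (simp add: card_gt_0_iff)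
    then have "card E' + 1 \<le> card V'"
      using less.hyps[of V' E'] less.prems False sub nc unfolding V'_def by blast
    then show ?thesis using cE cV by linarith
  qed
qed

lemma no_edge_out: "E \<subseteq> prs V \<Longrightarrow> w \<notin> V \<Longrightarrow> e \<in> E \<Longrightarrow> w \<notin> e"
  using prs_sub_Pow by blast

lemma add_leaf_tree:
  assumes T: "is_tree V E" and a: "a \<in> V" and w: "w \<notin> V"
  shows "is_tree (insert w V) (insert {a,w} E)"
proof -
  let ?E = "insert {a,w} E"
  have fV: "finite V" and sub: "E \<subseteq> prs V" and conn: "graph_connected V E"
    and nc: "\<not>(\<exists>xs. is_cycle E xs)" using T unfolding is_tree_alt by auto
  have aw: "a \<noteq> w" using a w by auto
  have sub': "?E \<subseteq> prs (insert w V)"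
  proof
    fix e assume "e \<in> ?E"
    then show "e \<in> prs (insert w V)"
    proof
      assume "e = {a,w}" then show ?thesis using a aw unfolding prs_def by blast
    next
      assume "e \<in> E" then have "e \<in> prs V" using sub by blast
      then show ?thesis unfolding prs_def by blast
    qed
  qed
  have conn': "graph_connected (insert w V) ?E"
    unfolding graph_connected_def
  proof (intro ballI)
    fix p q assume p: "p \<in> insert w V" and q: "q \<in> insert w V"
    have Vw: "\<And>xs. set xs \<subseteq> V \<Longrightarrow> set xs \<subseteq> insert w V" by blast
    show "\<exists>xs. is_walk ?E xs \<and> set xs \<subseteq> insert w V \<and> hd xs = p \<and> last xs = q"
    proof (cases "p = w")
      case pw: True
      show ?thesis
      proof (cases "q = w")
        case True then show ?thesis using pw by (intro exI[of _ "[w]"]) (simp add: is_walk_def)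
      next
        case False
        then have "q \<in> V" using q by simp
        then obtain xs where xs: "is_walk E xs" "set xs \<subseteq> V" "hd xs = a" "last xs = q"
          using conn a unfolding graph_connected_def by blast
        have ne: "xs \<noteq> []" using xs unfolding is_walk_def by simp
        have "is_walk ?E (w # xs)"
          by (rule walk_Cons) (use walk_mono[OF xs(1)] xs(3) in \<open>auto simp: insert_commute\<close>)
        then show ?thesis using xs pw ne by (intro exI[of _ "w # xs"]) auto
      qed
    next
      case pV: False
      then have pV: "p \<in> V" using p by simp
      show ?thesis
      proof (cases "q = w")
        case True
        obtain xs where xs: "is_walk E xs" "set xs \<subseteq> V" "hd xs = p" "last xs = a"
          using conn a pV unfolding graph_connected_def by blast
        have ne: "xs \<noteq> []" using xs unfolding is_walk_def by simp
        have "is_walk ?E (xs @ [w])"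
          by (rule walk_snoc) (use walk_mono[OF xs(1)] xs(4) in auto)
        then show ?thesis using xs True ne by (intro exI[of _ "xs @ [w]"]) auto
      next
        case False
        then have "q \<in> V" using q by simp
        then obtain xs where xs: "is_walk E xs" "set xs \<subseteq> V" "hd xs = p" "last xs = q"
          using conn pV unfolding graph_connected_def by blast
        then show ?thesis using walk_mono[OF xs(1), of ?E] by (intro exI[of _ xs]) auto
      qed
    qed
  qed
  have nc': "\<not>(\<exists>xs. is_cycle ?E xs)"
  proof
    assume "\<exists>xs. is_cycle ?E xs"
    then obtain xs where cyc: "is_cycle ?E xs" by blast
    define L where "L = length xs"
    have L3: "L \<ge> 3" and dist: "distinct xs" using cyc unfolding is_cycle_def L_def by auto
    show False
    proof (cases "w \<in> set xs")
      case False
      have edge: "\<And>x y. x \<in> set xs \<Longrightarrow> y \<in> set xs \<Longrightarrow> {x, y} \<in> ?E \<Longrightarrow> {x, y} \<in> E"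
        using False by (auto simp: doubleton_eq_iff)
      have "is_cycle E xs" unfolding is_cycle_def
      proof (intro conjI)
        show "3 \<le> length xs" "distinct xs" using cyc unfolding is_cycle_def by auto
        show "is_walk E xs" unfolding is_walk_def
        proof (intro conjI allI impI)
          show "xs \<noteq> []" using L3 L_def by auto
          fix i assume i: "Suc i < length xs"
          then have "xs ! i \<in> set xs" "xs ! Suc i \<in> set xs" by auto
          then show "{xs ! i, xs ! Suc i} \<in> E"
            using i cyc edge[of "xs ! i" "xs ! Suc i"] unfolding is_cycle_def is_walk_def by simp
        qed
        have "xs \<noteq> []" using L3 L_def by auto
        then have "last xs \<in> set xs" "hd xs \<in> set xs" by auto
        then show "{last xs, hd xs} \<in> E" using cyc edge unfolding is_cycle_def by blast
      qed
      then show False using nc by blast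
    next
      case True
      then obtain k where k: "k < L" "xs ! k = w" unfolding L_def by (auto simp: in_set_conv_nth)
      have nb: "xs ! j = a" if j: "j < L" "j \<noteq> k" "{w, xs ! j} \<in> ?E" for j
      proof -
        have "xs ! j \<noteq> w" using dist j k unfolding L_def by (metis nth_eq_iff_index_eq)
        moreover have "{w, xs ! j} \<notin> E" using no_edge_out[OF sub w] by blast
        ultimately show ?thesis using j(3) by (auto simp: doubleton_eq_iff)
      qed
      define i1 where "i1 = (if k + 1 = L then 0 else k + 1)"
      define i0 where "i0 = (if k = 0 then L - 1 else k - 1)"
      have i1m: "(k + 1) mod L = i1" unfolding i1_def using k by auto
      have i0m: "(i0 + 1) mod L = k" unfolding i0_def using k L3 by auto
      have i1L: "i1 < L" "i1 \<noteq> k" unfolding i1_def using k L3 by auto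
      have i0L: "i0 < L" "i0 \<noteq> k" unfolding i0_def using k L3 by auto
      have ne: "i0 \<noteq> i1" unfolding i0_def i1_def using k L3 by auto
      have "{xs ! k, xs ! i1} \<in> ?E" using cycle_edge[OF cyc, of k] k i1m unfolding L_def by simp
      then have "xs ! i1 = a" using nb[OF i1L] k by simp
      moreover have "{xs ! i0, xs ! k} \<in> ?E" using cycle_edge[OF cyc, of i0] i0L i0m unfolding L_def by simp
      then have "xs ! i0 = a" using nb[OF i0L] k by (simp add: insert_commute)
      ultimately have "xs ! i0 = xs ! i1" by simp
      then show False using dist i0L i1L ne unfolding L_def by (metis nth_eq_iff_index_eq)
    qed
  qed
  show ?thesis unfolding is_tree_alt using fV sub' conn' nc' by blast
qed

lemma add_leaf_deg:
  assumes "finite V" "E \<subseteq> prs V" "a \<in> V" "w \<notin> V"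
  shows "deg (insert {a,w} E) a = deg E a + 1"
    and "deg (insert {a,w} E) w = 1"
    and "y \<noteq> a \<Longrightarrow> y \<noteq> w \<Longrightarrow> deg (insert {a,w} E) y = deg E y"
proof -
  have fE: "finite E" using assms finite_E by blast
  have nE: "{a,w} \<notin> E" using no_edge_out[OF assms(2,4)] by blast
  have "{e \<in> insert {a,w} E. a \<in> e} = insert {a,w} {e \<in> E. a \<in> e}" by auto
  then show "deg (insert {a,w} E) a = deg E a + 1" unfolding deg_def using fE nE by simp
  have "{e \<in> insert {a,w} E. w \<in> e} = {{a,w}}" using no_edge_out[OF assms(2,4)] by auto
  then show "deg (insert {a,w} E) w = 1" unfolding deg_def by simp
  assume "y \<noteq> a" "y \<noteq> w"
  then have "{e \<in> insert {a,w} E. y \<in> e} = {e \<in> E. y \<in> e}" by auto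
  then show "deg (insert {a,w} E) y = deg E y" unfolding deg_def by simp
qed

lemma attach_leaves:
  fixes V :: "nat set"
  assumes T: "is_tree V E" and a: "a \<in> V"
  shows "\<exists>N E'. finite N \<and> N \<inter> V = {} \<and> card N = k \<and> is_tree (V \<union> N) E' \<and> E \<subseteq> E' \<and>
    deg E' a = deg E a + k \<and> (\<forall>w\<in>N. deg E' w = 1) \<and> (\<forall>y\<in>V. y \<noteq> a \<longrightarrow> deg E' y = deg E y)"
proof (induction k)
  case 0
  show ?case using T by (intro exI[of _ "{}"] exI[of _ E]) auto
next
  case (Suc k)
  then obtain N E' where IH: "finite N" "N \<inter> V = {}" "card N = k" "is_tree (V \<union> N) E'" "E \<subseteq> E'"
    "deg E' a = deg E a + k" "\<forall>w\<in>N. deg E' w = 1" "\<forall>y\<in>V. y \<noteq> a \<longrightarrow> deg E' y = deg E y"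
    by blast
  have fVN: "finite (V \<union> N)" and subN: "E' \<subseteq> prs (V \<union> N)" using IH(4) unfolding is_tree_alt by auto
  define w where "w = Suc (Max (V \<union> N))"
  have wn: "w \<notin> V \<union> N"
  proof
    assume "w \<in> V \<union> N"
    then have "w \<le> Max (V \<union> N)" using fVN by simp
    then show False unfolding w_def by simp
  qed
  have aVN: "a \<in> V \<union> N" using a by simp
  have T': "is_tree (insert w (V \<union> N)) (insert {a,w} E')" using add_leaf_tree[OF IH(4) aVN wn] .
  note D = add_leaf_deg[OF fVN subN aVN wn]
  have aw: "a \<noteq> w" using wn a by auto
  show ?case
  proof (intro exI[of _ "insert w N"] exI[of _ "insert {a,w} E'"] conjI ballI impI)
    show "finite (insert w N)" using IH by simp
    show "insert w N \<inter> V = {}" using IH wn by auto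
    show "card (insert w N) = Suc k" using IH wn by simp
    show "is_tree (V \<union> insert w N) (insert {a, w} E')" using T' by (simp add: insert_commute)
    show "E \<subseteq> insert {a, w} E'" using IH by auto
    show "deg (insert {a, w} E') a = deg E a + Suc k" using D(1) IH by simp
  next
    fix y assume "y \<in> insert w N"
    then show "deg (insert {a, w} E') y = 1"
    proof
      assume "y = w" then show ?thesis using D(2) by simp
    next
      assume yN: "y \<in> N"
      then have "y \<noteq> a" "y \<noteq> w" using IH(2) a wn by auto
      then show ?thesis using D(3) IH(7) yN by simp
    qed
  next
    fix y assume "y \<in> V" "y \<noteq> a"
    then have "y \<noteq> w" using wn by auto
    then show "deg (insert {a, w} E') y = deg E y" using D(3) IH(8) \<open>y \<in> V\<close> \<open>y \<noteq> a\<close> by simp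
  qed
qed

lemma tree_single: "is_tree {v} {}"
  unfolding is_tree_alt graph_connected_def is_cycle_def
proof (intro conjI)
  show "\<forall>u\<in>{v}. \<forall>va\<in>{v}. \<exists>xs. is_walk {} xs \<and> set xs \<subseteq> {v} \<and> hd xs = u \<and> last xs = va"
    by (auto intro!: exI[of _ "[v]"] simp: is_walk_def)
  show "\<not> (\<exists>xs. 3 \<le> length xs \<and> distinct xs \<and> is_walk {} xs \<and> {last xs, hd xs} \<in> {})" by simp
qed auto

lemma base_tree:
  "is_tree {0::nat,1,2,3} {{0,1},{1,2},{2,3}}"
proof -
  have t1: "is_tree (insert 1 {0::nat}) (insert {0,1} {})"
    by (rule add_leaf_tree[OF tree_single]) auto
  have t2: "is_tree (insert 2 (insert 1 {0::nat})) (insert {1,2} (insert {0,1} {}))"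
    by (rule add_leaf_tree[OF t1]) auto
  have t3: "is_tree (insert 3 (insert 2 (insert 1 {0::nat}))) (insert {2,3} (insert {1,2} (insert {0,1} {})))"
    by (rule add_leaf_tree[OF t2]) auto
  show ?thesis using t3 by (simp add: insert_commute)
qed

lemma build:
  fixes x :: "nat \<Rightarrow> int"
  assumes "\<forall>i\<in>{1..m}. x i \<ge> 2"
  shows "\<exists>(V::nat set) E l. is_tree V E \<and> {1,2} \<in> E \<and> 1 \<in> V \<and> 2 \<in> V \<and> deg E 1 = 2 \<and> deg E 2 = 2
     \<and> l \<in> V \<and> l \<noteq> 1 \<and> l \<noteq> 2 \<and> deg E l = 1
     \<and> (\<lambda>w. int (deg E w)) ` (V - {1,2}) = insert 1 (x ` {1..m})
     \<and> int (card V) = 4 + (\<Sum>i=1..m. x i - 1)"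
  using assms
proof (induction m)
  case 0
  define E :: "nat set set" where "E = {{0,1},{1,2},{2,3}}"
  have d0: "{e \<in> E. 0 \<in> e} = {{0,1}}" unfolding E_def by auto
  have d1: "{e \<in> E. 1 \<in> e} = {{0,1},{1,2}}" unfolding E_def by auto
  have d2: "{e \<in> E. 2 \<in> e} = {{1,2},{2,3}}" unfolding E_def by auto
  have d3: "{e \<in> E. 3 \<in> e} = {{2,3}}" unfolding E_def by auto
  have ne1: "{0::nat,1} \<noteq> {1,2}" "{1::nat,2} \<noteq> {2,3}" by (auto simp: doubleton_eq_iff)
  have deg: "deg E 0 = 1" "deg E 1 = 2" "deg E 2 = 2" "deg E 3 = 1"
    unfolding deg_def d0 d1 d2 d3 using ne1 by auto
  have img: "({0::nat,1,2,3} - {1,2}) = {0,3}" by auto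
  show ?case
    apply (intro exI[of _ "{0::nat,1,2,3}"] exI[of _ E] exI[of _ "3::nat"])
    using base_tree deg img unfolding E_def[symmetric] by (auto simp: E_def)
next
  case (Suc m)
  have pm: "\<forall>i\<in>{1..m}. x i \<ge> 2" using Suc.prems by auto
  obtain V :: "nat set" and E l where IH: "is_tree V E" "{1,2} \<in> E" "1 \<in> V" "2 \<in> V" "deg E 1 = 2" "deg E 2 = 2"
     "l \<in> V" "l \<noteq> 1" "l \<noteq> 2" "deg E l = 1"
     "(\<lambda>w. int (deg E w)) ` (V - {1,2}) = insert 1 (x ` {1..m})"
     "int (card V) = 4 + (\<Sum>i=1..m. x i - 1)" using Suc.IH[OF pm] by blast
  define k where "k = nat (x (Suc m)) - 1"
  have xs: "x (Suc m) \<ge> 2" using Suc.prems by simp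
  have k: "int k = x (Suc m) - 1" "k \<ge> 1" unfolding k_def using xs by auto
  obtain N E' where A: "finite N" "N \<inter> V = {}" "card N = k" "is_tree (V \<union> N) E'" "E \<subseteq> E'"
    "deg E' l = deg E l + k" "\<forall>w\<in>N. deg E' w = 1" "\<forall>y\<in>V. y \<noteq> l \<longrightarrow> deg E' y = deg E y"
    using attach_leaves[OF IH(1) IH(7), of k] by blast
  have "N \<noteq> {}" using A(3) k by auto
  then obtain l' where l': "l' \<in> N" by blast
  have fV: "finite V" using IH(1) unfolding is_tree_alt by simp
  let ?f = "\<lambda>w. int (deg E w)"
  let ?g = "\<lambda>w. int (deg E' w)"
  define R where "R = V - {1,2} - {l}"
  have VR: "V - {1,2} = insert l R" unfolding R_def using IH by auto
  have V'R: "(V \<union> N) - {1,2} = insert l (R \<union> N)" unfolding R_def using IH A(2) by auto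
  have gR: "?g ` R = ?f ` R" using A(8) unfolding R_def by (intro image_cong) auto
  have gN: "?g ` N = {1}" using A(7) \<open>N \<noteq> {}\<close> by auto
  have gl: "?g l = x (Suc m)" using A(6) IH(10) k by simp
  have fl: "?f l = 1" using IH(10) by simp
  have h: "insert 1 (?f ` R) = insert 1 (x ` {1..m})" using IH(11) VR fl by simp
  have "?g ` ((V \<union> N) - {1,2}) = insert (?g l) (?g ` R \<union> ?g ` N)" unfolding V'R by auto
  also have "\<dots> = insert (x (Suc m)) (insert 1 (?f ` R))" using gR gN gl by auto
  also have "\<dots> = insert (x (Suc m)) (insert 1 (x ` {1..m}))" using h by simp
  also have "\<dots> = insert 1 (x ` {1..Suc m})"
    by (subst atLeastAtMostSuc_conv) auto
  finally have img: "?g ` ((V \<union> N) - {1,2}) = insert 1 (x ` {1..Suc m})" .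
  have cV: "card (V \<union> N) = card V + k" using A(1-3) fV by (simp add: card_Un_disjoint inf_commute)
  have sum: "(\<Sum>i=1..Suc m. x i - 1) = (\<Sum>i=1..m. x i - 1) + (x (Suc m) - 1)" by simp
  show ?case
  proof (intro exI[of _ "V \<union> N"] exI[of _ E'] exI[of _ l'] conjI)
    show "is_tree (V \<union> N) E'" by fact
    show "{1, 2} \<in> E'" using A(5) IH(2) by blast
    show "1 \<in> V \<union> N" "2 \<in> V \<union> N" using IH by auto
    show "deg E' 1 = 2" using A(8) IH by auto
    show "deg E' 2 = 2" using A(8) IH by auto
    show "l' \<in> V \<union> N" using l' by simp
    show "l' \<noteq> 1" "l' \<noteq> 2" using l' A(2) IH(3,4) by auto
    show "deg E' l' = 1" using l' A(7) by simp
    show "?g ` ((V \<union> N) - {1,2}) = insert 1 (x ` {1..Suc m})" by (rule img)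
    show "int (card (V \<union> N)) = 4 + (\<Sum>i=1..Suc m. x i - 1)" using cV sum IH(12) k by simp
  qed
qed

lemma sdeg_one_neg:
  assumes "finite E" "{e \<in> E. \<not> s e} = {{a,b}}"
  shows "sdeg E s w = int (deg E w) - (if w = a \<or> w = b then 2 else 0)"
proof -
  have "{e \<in> E. w \<in> e \<and> \<not> s e} = {e \<in> {e \<in> E. \<not> s e}. w \<in> e}" by auto
  also have "\<dots> = (if w = a \<or> w = b then {{a,b}} else {})" unfolding assms(2) by auto
  finally have neg: "{e \<in> E. w \<in> e \<and> \<not> s e} = (if w = a \<or> w = b then {{a,b}} else {})" .
  have un: "{e \<in> E. w \<in> e} = {e \<in> E. w \<in> e \<and> s e} \<union> {e \<in> E. w \<in> e \<and> \<not> s e}" by auto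
  have "deg E w = card {e \<in> E. w \<in> e \<and> s e} + card {e \<in> E. w \<in> e \<and> \<not> s e}"
    unfolding deg_def un using assms(1) by (intro card_Un_disjoint) auto
  then show ?thesis unfolding sdeg_def using neg by (auto split: if_splits)
qed

lemma sigma_le:
  fixes x :: "nat \<Rightarrow> int"
  assumes "\<forall>i\<in>{1..n}. x i \<ge> 2"
  shows "int (sigma ({1,0} \<union> x ` {1..n})) \<le> 4 + (\<Sum>i=1..n. x i - 1)"
proof -
  obtain V :: "nat set" and E l where B: "is_tree V E" "{1,2} \<in> E" "1 \<in> V" "2 \<in> V" "deg E 1 = 2" "deg E 2 = 2"
     "(\<lambda>w. int (deg E w)) ` (V - {1,2}) = insert 1 (x ` {1..n})"
     "int (card V) = 4 + (\<Sum>i=1..n. x i - 1)"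
    using build[OF assms] by blast
  define s0 where "s0 = (\<lambda>e::nat set. e \<noteq> {1,2})"
  have fE: "finite E" using B(1) finite_E unfolding is_tree_alt by blast
  have neg: "{e \<in> E. \<not> s0 e} = {{1,2}}" using B(2) by (auto simp: s0_def)
  note sd = sdeg_one_neg[OF fE neg]
  have V: "V = {1,2} \<union> (V - {1,2})" using B(3,4) by auto
  have "sdeg E s0 ` V = sdeg E s0 ` {1,2} \<union> sdeg E s0 ` (V - {1,2})" by (subst V) (rule image_Un)
  also have "sdeg E s0 ` {1,2} = {0}" using sd B(5,6) by simp
  also have "sdeg E s0 ` (V - {1,2}) = (\<lambda>w. int (deg E w)) ` (V - {1,2})"
    using sd by (intro image_cong) auto
  finally have "sdeg E s0 ` V = {1,0} \<union> x ` {1..n}" using B(7) by auto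
  then have R: "realizes V E s0 ({1,0} \<union> x ` {1..n})" unfolding realizes_def by simp
  have "sigma ({1,0} \<union> x ` {1..n}) \<le> card V"
    unfolding sigma_def by (rule Least_le) (use B(1) R in blast)
  then show ?thesis using B(8) by linarith
qed

theorem mainTheorem11:
  fixes n :: nat and x :: "nat \<Rightarrow> int" and D :: "int set"
    and V :: "'a set" and E :: "'a set set" and s :: "'a set \<Rightarrow> bool" and u v :: 'a
  assumes "n \<ge> 1"
    and "inj_on x {1..n}"
    and "\<forall>i\<in>{1..n}. x i > 1"
    and "D = {1, 0} \<union> x ` {1..n}"
    and "optimal V E s D"
    and "{e \<in> E. \<not> s e} = {{u, v}}"
  shows "deg E u = 2 \<and> deg E v = 2"
proof -
  have T: "is_tree V E" and R: "D = sdeg E s ` V" and cV: "card V = sigma D"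
    using assms(5) unfolding optimal_def realizes_def by auto
  have fV: "finite V" and sub: "E \<subseteq> prs V" and conn: "graph_connected V E"
    and nc: "\<not>(\<exists>xs. is_cycle E xs)" using T unfolding is_tree_alt by auto
  have fE: "finite E" using fV sub finite_E by blast
  have uvE: "{u,v} \<in> E" using assms(6) by blast
  then have "{u,v} \<in> prs V" using sub by blast
  then have uv: "u \<noteq> v" "u \<in> V" "v \<in> V" using card_prs[of "{u,v}" V] prs_sub_Pow by (auto simp: card_insert_if split: if_splits)
  note sd = sdeg_one_neg[OF fE assms(6)]
  have deg1: "deg E w \<ge> 1" if "w \<in> V" for w
  proof (cases "w = u")
    case True then show ?thesis using conn_deg[OF conn that uv(3) _ fE] uv by auto
  next
    case False then show ?thesis using conn_deg[OF conn that uv(2) _ fE] by auto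
  qed
  have sig: "int (card V) \<le> 4 + (\<Sum>i=1..n. x i - 1)"
    using sigma_le[of n x] assms(3,4) cV by force
  have hs: "(\<Sum>y\<in>V. deg E y) = 2 * card E" using handshake[OF fV sub] .
  have fb: "card E + 1 \<le> card V" using forest_bound[OF fV _ sub nc] uv by blast
  have sumV: "(\<Sum>y\<in>V. int (deg E y) - 1) \<le> int (card V) - 2"
  proof -
    have "(\<Sum>y\<in>V. int (deg E y) - 1) = int (\<Sum>y\<in>V. deg E y) - int (card V)"
      by (simp add: sum_subtractf)
    also have "\<dots> = 2 * int (card E) - int (card V)" using hs by simp
    finally show ?thesis using fb by linarith
  qed
  have Dcases: "d = 1 \<or> d = 0 \<or> d > 1" if "d \<in> D" for d
    using that assms(3,4) by auto
  have key: "deg E q = 2" if pq: "{p,q} = {u,v}" "p \<noteq> q" "deg E p = 2" for p q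
  proof (rule ccontr)
    assume nq: "deg E q \<noteq> 2"
    have pV: "p \<in> V" and qV: "q \<in> V" using pq uv by (auto simp: doubleton_eq_iff)
    have isuv: "(w = u \<or> w = v) \<longleftrightarrow> (w = p \<or> w = q)" for w using pq(1) by (auto simp: doubleton_eq_iff)
    have sd': "sdeg E s w = int (deg E w) - (if w = p \<or> w = q then 2 else 0)" for w
      using sd[of w] isuv[of w] by simp
    define c where "c = sdeg E s q"
    have c: "c = int (deg E q) - 2" unfolding c_def using sd' by simp
    have sp: "sdeg E s p = 0" using sd' pq(3) by simp
    have "c \<in> D" unfolding R c_def using qV by blast
    moreover have "c \<noteq> 0" using c nq by simp
    moreover have "c \<ge> -1" using c deg1[OF qV] by simp
    ultimately have c1: "c \<ge> 1" using Dcases[of c] by auto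
    define I where "I = {i \<in> {1..n}. x i \<noteq> c}"
    define J where "J = {i \<in> {1..n}. x i = c}"
    define w where "w i = (SOME y. y \<in> V \<and> sdeg E s y = x i)" for i
    have w: "w i \<in> V \<and> sdeg E s (w i) = x i" if "i \<in> {1..n}" for i
    proof -
      have "x i \<in> sdeg E s ` V" using that R assms(4) by blast
      then obtain y where "y \<in> V" "x i = sdeg E s y" by (rule imageE)
      then have "\<exists>y. y \<in> V \<and> sdeg E s y = x i" by metis
      then show ?thesis unfolding w_def by (rule someI_ex)
    qed
    have wI: "w i \<in> V" "w i \<noteq> p" "w i \<noteq> q" "int (deg E (w i)) = x i" if "i \<in> I" for i
    proof -
      have i: "i \<in> {1..n}" "x i \<noteq> c" using that unfolding I_def by auto
      show "w i \<in> V" using w[OF i(1)] by simp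
      show wp: "w i \<noteq> p" using w[OF i(1)] sp assms(3) i(1) by force
      show wq: "w i \<noteq> q" using w[OF i(1)] i(2) unfolding c_def by force
      show "int (deg E (w i)) = x i" using w[OF i(1)] sd'[of "w i"] wp wq by simp
    qed
    have injw: "inj_on w I"
    proof (rule inj_onI)
      fix i j assume "i \<in> I" "j \<in> I" "w i = w j"
      then have "x i = x j" using wI by metis
      then show "i = j" using assms(2) \<open>i \<in> I\<close> \<open>j \<in> I\<close> unfolding I_def inj_on_def by blast
    qed
    have fI: "finite I" unfolding I_def by simp
    let ?W = "insert p (insert q (w ` I))"
    have WV: "?W \<subseteq> V" using pV qV wI by auto
    have "(\<Sum>y\<in>?W. int (deg E y) - 1) \<le> (\<Sum>y\<in>V. int (deg E y) - 1)"
      by (rule sum_mono2[OF fV WV]) (use deg1 in \<open>auto simp: Suc_le_eq\<close>)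
    moreover have "(\<Sum>y\<in>?W. int (deg E y) - 1) = (int (deg E p) - 1) + (int (deg E q) - 1) + (\<Sum>y\<in>w ` I. int (deg E y) - 1)"
    proof -
      have "p \<notin> insert q (w ` I)" using pq(2) wI by auto
      moreover have "q \<notin> w ` I" using wI by auto
      ultimately show ?thesis using fI by simp
    qed
    moreover have "(\<Sum>y\<in>w ` I. int (deg E y) - 1) = (\<Sum>i\<in>I. x i - 1)"
      by (subst sum.reindex[OF injw]) (use wI in simp)
    ultimately have low: "1 + (c + 1) + (\<Sum>i\<in>I. x i - 1) \<le> int (card V) - 2"
      using sumV pq(3) c by simp
    have split: "(\<Sum>i=1..n. x i - 1) = (\<Sum>i\<in>I. x i - 1) + (\<Sum>i\<in>J. x i - 1)"
    proof -
      have e: "{1..n} = I \<union> J" "I \<inter> J = {}" unfolding I_def J_def by auto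
      have fJ: "finite J" unfolding J_def by simp
      show ?thesis unfolding e(1) by (rule sum.union_disjoint[OF fI fJ e(2)])
    qed
    have cJ: "card J \<le> 1"
    proof -
      have "inj_on x J" using assms(2) unfolding J_def inj_on_def by blast
      then have "card J = card (x ` J)" by (simp add: card_image)
      also have "\<dots> \<le> card {c}" by (rule card_mono) (auto simp: J_def)
      finally show ?thesis by simp
    qed
    have "(\<Sum>i\<in>J. x i - 1) = int (card J) * (c - 1)" unfolding J_def by simp
    also have "\<dots> \<le> c - 1" using cJ c1 by (cases "card J = 0") (auto simp: le_Suc_eq)
    finally have "(\<Sum>i\<in>J. x i - 1) \<le> c - 1" .
    then show False using low split sig by linarith
  qed
  obtain w0 where w0: "w0 \<in> V" "sdeg E s w0 = 0" using R assms(4) by (metis UnCI imageE insertCI)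
  have "w0 = u \<or> w0 = v"
  proof (rule ccontr)
    assume "\<not> ?thesis"
    then have "sdeg E s w0 = int (deg E w0)" using sd by simp
    then show False using w0 deg1[OF w0(1)] by simp
  qed
  then have "deg E u = 2 \<or> deg E v = 2" using w0 sd by (auto split: if_splits)
  then show ?thesis
  proof
    assume "deg E u = 2" then show ?thesis using key[of u v] uv by auto
  next
    assume "deg E v = 2" then show ?thesis using key[of v u] uv by (auto simp: insert_commute)
  qed
qed

end
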